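(* Let $C\subset\mathbb{R}^2$ be a Jordan curve enclosing a convex region, and suppose there exist $c^1,c^2,c^3,c^4\in C$, $c^i=(c^i_1,c^i_2)$, such that $c^1_1=\min\{c_1:(c_1,c_2)\in C\}$, $c^2_2=\min\{c_2:(c_1,c_2)\in C\}$, $c^3_1=\max\{c_1:(c_1,c_2)\in C\}$, $c^4_2=\max\{c_2:(c_1,c_2)\in C\}$, and $$c^1_1<\min\{c^2_1,c^3_1,c^4_1\},\ c^2_2<\min\{c^1_2,c^3_2,c^4_2\},\ c^3_1>\max\{c^1_1,c^2_1,c^4_1\},\ c^4_2>\max\{c^1_2,c^2_2,c^3_2\}.$$ Then for every $x\in\mathbb{R}^2$ there exist $u=(u_1,u_2),v=(v_1,v_2),w=(w_1,w_2)\in C$ and $t\ne0$ such that $u-v=tx$, $w_1=u_1$ and $w_2=v_2$. *)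

theory Defs
  imports "HOL-Analysis.Analysis"
begin

definition jordan_curve :: "(real^2) set \<Rightarrow> bool" where
  "jordan_curve C \<longleftrightarrow> (\<exists>g. simple_path g \<and> pathfinish g = pathstart g \<and> path_image g = C)"

end

theory Submission
  imports Defs
begin


definition pt :: "real \<Rightarrow> real \<Rightarrow> real^2" where
  "pt a b = (\<chi> i. if i = 1 then a else b)"

lemma pt_1[simp]: "pt a b $ 1 = a" by (simp add: pt_def)
lemma pt_2[simp]: "pt a b $ 2 = b" by (simp add: pt_def)
lemma pt_eta[simp]: "pt (x$1) (x$2) = x" by (simp add: vec_eq_iff forall_2)
lemma pt_eq[simp]: "pt a b = pt c d \<longleftrightarrow> a = c \<and> b = d"
  by (auto simp: vec_eq_iff forall_2)
lemma pt_add: "pt a b + pt c d = pt (a+c) (b+d)" by (simp add: vec_eq_iff forall_2)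
lemma pt_diff: "pt a b - pt c d = pt (a-c) (b-d)" by (simp add: vec_eq_iff forall_2)
lemma pt_scale: "r *\<^sub>R pt a b = pt (r*a) (r*b)" by (simp add: vec_eq_iff forall_2)
lemma pt_decomp: "pt x y = x *\<^sub>R pt 1 0 + pt 0 y" by (simp add: vec_eq_iff forall_2)
lemma pt_decomp2: "pt x y = pt x 0 + y *\<^sub>R pt 0 1" by (simp add: vec_eq_iff forall_2)

lemma pt_fun1: "(\<lambda>x. pt x y) = (\<lambda>x. x *\<^sub>R pt 1 0 + pt 0 y)"
  by (simp add: pt_decomp[symmetric])
lemma cont_pt1: "continuous_on A (\<lambda>x. pt x y)"
  unfolding pt_fun1 by (intro continuous_intros)
lemma isCont_pt1: "isCont (\<lambda>x. pt x y) x"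
  unfolding pt_fun1 by (intro continuous_intros)

lemma sect_sup:
  fixes S :: "(real^2) set"
  assumes cS: "compact S" and vS: "convex S" and ab: "\<alpha> \<le> \<beta>"
    and ne: "\<And>y. \<alpha> \<le> y \<Longrightarrow> y \<le> \<beta> \<Longrightarrow> \<exists>x. pt x y \<in> S"
  shows "\<And>y. \<alpha> \<le> y \<Longrightarrow> y \<le> \<beta> \<Longrightarrow> pt (Sup {x. pt x y \<in> S}) y \<in> S"
    and "\<And>x y. pt x y \<in> S \<Longrightarrow> x \<le> Sup {x. pt x y \<in> S}"
    and "continuous_on {\<alpha>..\<beta>} (\<lambda>y. Sup {x. pt x y \<in> S})"
proof -
  define f where "f = (\<lambda>y. Sup {x. pt x y \<in> S})"
  obtain B where B: "\<And>p. p \<in> S \<Longrightarrow> norm p \<le> B"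
    using compact_imp_bounded[OF cS] bounded_iff by blast
  have bdd: "bdd_above {x. pt x y \<in> S}" for y
  proof (rule bdd_aboveI)
    fix x assume "x \<in> {x. pt x y \<in> S}"
    then have "norm (pt x y) \<le> B" using B by auto
    moreover have "\<bar>pt x y $ 1\<bar> \<le> norm (pt x y)" by (rule component_le_norm_cart)
    ultimately show "x \<le> B" by simp
  qed
  show up: "x \<le> Sup {x. pt x y \<in> S}" if "pt x y \<in> S" for x y
    using that bdd by (intro cSup_upper) auto
  have cl: "closed {x. pt x y \<in> S}" for y
  proof -
    have "closed ((\<lambda>x. pt x y) -` S)"
      using compact_imp_closed[OF cS] isCont_pt1
      by (intro continuous_closed_vimage) auto
    then show ?thesis by (simp add: vimage_def)
  qed
  show mem: "pt (Sup {x. pt x y \<in> S}) y \<in> S" if "\<alpha> \<le> y" "y \<le> \<beta>" for y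
  proof -
    have "Sup {x. pt x y \<in> S} \<in> {x. pt x y \<in> S}"
      using ne[OF that] bdd cl by (intro closed_contains_Sup) auto
    then show ?thesis by simp
  qed
  have fB: "\<bar>f y\<bar> \<le> B" if "\<alpha> \<le> y" "y \<le> \<beta>" for y
  proof -
    have "norm (pt (f y) y) \<le> B" using B mem[OF that] by (simp add: f_def)
    moreover have "\<bar>pt (f y) y $ 1\<bar> \<le> norm (pt (f y) y)" by (rule component_le_norm_cart)
    ultimately show ?thesis by simp
  qed
  have B0: "0 \<le> B" using fB[of \<alpha>] ab by linarith
  have conc: "(1-l) * f y1 + l * f y2 \<le> f ((1-l)*y1 + l*y2)"
    if "\<alpha> \<le> y1" "y1 \<le> \<beta>" "\<alpha> \<le> y2" "y2 \<le> \<beta>" "0 \<le> l" "l \<le> 1" for y1 y2 l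
  proof -
    have "(1-l) *\<^sub>R pt (f y1) y1 + l *\<^sub>R pt (f y2) y2 \<in> S"
      using mem[of y1] mem[of y2] that vS unfolding f_def
      by (intro convexD) auto
    then have "pt ((1-l) * f y1 + l * f y2) ((1-l)*y1 + l*y2) \<in> S"
      by (simp add: pt_scale pt_add)
    then show ?thesis unfolding f_def by (rule up)
  qed
  show "continuous_on {\<alpha>..\<beta>} (\<lambda>y. Sup {x. pt x y \<in> S})"
    unfolding f_def[symmetric] continuous_on_iff
  proof (intro ballI allI impI)
    fix y0 e :: real assume y0: "y0 \<in> {\<alpha>..\<beta>}" and e: "0 < e"
    define P where "P = (\<lambda>p::real^2. p$2) ` (S \<inter> {p. f y0 + e \<le> p$1})"
    have "compact P" unfolding P_def
      by (intro compact_continuous_image compact_Int_closed cS continuous_intros closed_Collect_le)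
    moreover have "y0 \<notin> P"
    proof
      assume "y0 \<in> P"
      then obtain p where p: "p \<in> S" "f y0 + e \<le> p$1" "p$2 = y0" unfolding P_def by auto
      then have "pt (p$1) y0 \<in> S" by (metis pt_eta)
      then have "p$1 \<le> f y0" unfolding f_def by (rule up)
      then show False using p e by linarith
    qed
    ultimately obtain d1 where d1: "d1 > 0" "ball y0 d1 \<subseteq> - P"
      using open_contains_ball[of "- P"] compact_imp_closed by (metis ComplI open_Compl)
    define d2 where "d2 = (if y0 < \<beta> then e * (\<beta> - y0) / (2*B+1) else 1)"
    define d3 where "d3 = (if \<alpha> < y0 then e * (y0 - \<alpha>) / (2*B+1) else 1)"
    have d2: "d2 > 0" and d3: "d3 > 0" using e B0 by (auto simp: d2_def d3_def)
    show "\<exists>d>0. \<forall>y\<in>{\<alpha>..\<beta>}. dist y y0 < d \<longrightarrow> dist (f y) (f y0) < e"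
    proof (intro exI[of _ "min d1 (min d2 d3)"] conjI ballI impI)
      show "0 < min d1 (min d2 d3)" using d1 d2 d3 by auto
      fix y assume y: "y \<in> {\<alpha>..\<beta>}" and dy: "dist y y0 < min d1 (min d2 d3)"
      have "f y < f y0 + e"
      proof (rule ccontr)
        assume "\<not> f y < f y0 + e"
        then have "y \<in> P" unfolding P_def using mem[of y] y
          by (auto simp: f_def intro!: image_eqI[of _ _ "pt (f y) y"])
        moreover have "y \<in> ball y0 d1" using dy by (simp add: dist_commute)
        ultimately show False using d1 by auto
      qed
      moreover have "f y0 - e < f y"
      proof (cases "y0 < y")
        case True
        then have yb: "y0 < \<beta>" using y by auto
        define l where "l = (y - y0) / (\<beta> - y0)"
        have l01: "0 \<le> l" "l \<le> 1" using True y yb by (auto simp: l_def field_simps)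
        have "l*(\<beta>-y0) = y - y0" using yb by (simp add: l_def)
        then have yl: "(1-l)*y0 + l*\<beta> = y" by (simp add: algebra_simps)
        have "(1-l) * f y0 + l * f \<beta> \<le> f y"
          using conc[of y0 \<beta> l] y0 ab l01 yl by auto
        moreover have "l*(f y0 - f \<beta>) \<le> l*(2*B)" using fB[of y0] fB[of \<beta>] y0 ab l01 by (intro mult_left_mono) auto
        moreover have "l * (2*B) < e"
        proof -
          have "y - y0 < e * (\<beta> - y0) / (2*B+1)" using dy yb True by (simp add: d2_def dist_real_def)
          then have "l < e / (2*B+1)" using yb B0 by (simp add: l_def field_simps)
          then have "l * (2*B+1) < e" using B0 by (simp add: field_simps)
          moreover have "l*(2*B) \<le> l*(2*B+1)" using l01 by (intro mult_left_mono) auto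
          ultimately show ?thesis by linarith
        qed
        ultimately show ?thesis by (simp add: algebra_simps)
      next
        case False
        show ?thesis
        proof (cases "y = y0")
          case True then show ?thesis using e by simp
        next
          case ne2: False
          with False have T: "y < y0" by auto
          then have ya: "\<alpha> < y0" using y by auto
          define l where "l = (y0 - y) / (y0 - \<alpha>)"
          have l01: "0 \<le> l" "l \<le> 1" using T y ya by (auto simp: l_def field_simps)
          have "l*(y0-\<alpha>) = y0 - y" using ya by (simp add: l_def)
          then have yl: "(1-l)*y0 + l*\<alpha> = y" by (simp add: algebra_simps)
          have "(1-l) * f y0 + l * f \<alpha> \<le> f y"
            using conc[of y0 \<alpha> l] y0 ab l01 yl by auto
          moreover have "l*(f y0 - f \<alpha>) \<le> l*(2*B)" using fB[of y0] fB[of \<alpha>] y0 ab l01 by (intro mult_left_mono) auto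
          moreover have "l * (2*B) < e"
          proof -
            have "y0 - y < e * (y0 - \<alpha>) / (2*B+1)" using dy ya T by (simp add: d3_def dist_real_def)
            then have "l < e / (2*B+1)" using ya B0 by (simp add: l_def field_simps)
            then have "l * (2*B+1) < e" using B0 by (simp add: field_simps)
            moreover have "l*(2*B) \<le> l*(2*B+1)" using l01 by (intro mult_left_mono) auto
          ultimately show ?thesis by linarith
          qed
          ultimately show ?thesis by (simp add: algebra_simps)
        qed
      qed
      ultimately show "dist (f y) (f y0) < e" by (simp add: dist_real_def abs_less_iff)
    qed
  qed
qed




lemma seg:
  fixes K :: "(real^2) set"
  assumes "convex K" "A \<in> K" "B \<in> K" "A$2 \<le> y" "y \<le> B$2"
  shows "\<exists>x. pt x y \<in> K \<and> min (A$1) (B$1) \<le> x \<and> x \<le> max (A$1) (B$1)"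
proof (cases "A$2 = B$2")
  case True
  then have "y = A$2" using assms by auto
  then show ?thesis using assms(2) by (intro exI[of _ "A$1"]) auto
next
  case False
  then have lt: "A$2 < B$2" using assms by auto
  define l where "l = (y - A$2) / (B$2 - A$2)"
  have l01: "0 \<le> l" "l \<le> 1" using assms lt by (auto simp: l_def field_simps)
  define q where "q = (1-l) *\<^sub>R A + l *\<^sub>R B"
  have qK: "q \<in> K" unfolding q_def using assms l01 by (intro convexD) auto
  have "l * (B$2 - A$2) = y - A$2" using lt by (simp add: l_def)
  then have q2: "q$2 = y" by (simp add: algebra_simps q_def)
  have "pt (q$1) y \<in> K" using qK q2 pt_eta[of q] by simp
  moreover have "min (A$1) (B$1) \<le> (1-l) * A$1 + l * B$1"
  proof -
    have "(1-l) * min (A$1) (B$1) \<le> (1-l) * A$1" using l01 by (intro mult_left_mono) auto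
    moreover have "l * min (A$1) (B$1) \<le> l * B$1" using l01 by (intro mult_left_mono) auto
    ultimately show ?thesis by (simp add: algebra_simps)
  qed
  moreover have "(1-l) * A$1 + l * B$1 \<le> max (A$1) (B$1)"
  proof -
    have "(1-l) * A$1 \<le> (1-l) * max (A$1) (B$1)" using l01 by (intro mult_left_mono) auto
    moreover have "l * B$1 \<le> l * max (A$1) (B$1)" using l01 by (intro mult_left_mono) auto
    ultimately show ?thesis by (simp add: algebra_simps)
  qed
  ultimately show ?thesis
    by (intro exI[of _ "q$1"]) (simp add: q_def)
qed

lemma tp:
  fixes K :: "(real^2) set"
  assumes "convex K" "A \<in> K" "P \<in> K" "X \<in> K" "P$2 = X$2" "P$1 < X$1"
    and y: "A$2 < y \<and> y \<le> P$2 \<or> P$2 \<le> y \<and> y < A$2"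
  shows "\<exists>x x'. x < x' \<and> pt x y \<in> K \<and> pt x' y \<in> K"
proof -
  have ne: "P$2 - A$2 \<noteq> 0" using y by auto
  define l where "l = (y - A$2) / (P$2 - A$2)"
  have l01: "0 < l" "l \<le> 1" using y by (auto simp: l_def field_simps)
  have q: "(1-l) *\<^sub>R A + l *\<^sub>R P \<in> K" using assms l01 by (intro convexD) auto
  have r: "(1-l) *\<^sub>R A + l *\<^sub>R X \<in> K" using assms l01 by (intro convexD) auto
  have ly: "l * (P$2 - A$2) = y - A$2" using ne by (simp add: l_def)
  have q2: "((1-l) *\<^sub>R A + l *\<^sub>R P)$2 = y" using ly by (simp add: algebra_simps)
  have r2: "((1-l) *\<^sub>R A + l *\<^sub>R X)$2 = y" using ly assms(5) by (simp add: algebra_simps)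
  have "l * P$1 < l * X$1" using l01 assms(6) by simp
  then have "((1-l) *\<^sub>R A + l *\<^sub>R P)$1 < ((1-l) *\<^sub>R A + l *\<^sub>R X)$1" by simp
  then show ?thesis using q r q2 r2 pt_eta[of "(1-l) *\<^sub>R A + l *\<^sub>R P"] pt_eta[of "(1-l) *\<^sub>R A + l *\<^sub>R X"]
    by (intro exI[of _ "((1-l) *\<^sub>R A + l *\<^sub>R P)$1"] exI[of _ "((1-l) *\<^sub>R A + l *\<^sub>R X)$1"]) simp
qed

lemma secconv:
  fixes K :: "(real^2) set"
  assumes "convex K" "pt x1 y \<in> K" "pt x2 y \<in> K" "x1 \<le> x" "x \<le> x2"
  shows "pt x y \<in> K"
proof (cases "x1 = x2")
  case True then show ?thesis using assms by auto
next
  case False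
  then have lt: "x1 < x2" using assms by auto
  define l where "l = (x - x1) / (x2 - x1)"
  have l01: "0 \<le> l" "l \<le> 1" using assms lt by (auto simp: l_def field_simps)
  have "(1-l) *\<^sub>R pt x1 y + l *\<^sub>R pt x2 y \<in> K" using assms l01 by (intro convexD) auto
  moreover have "l * (x2 - x1) = x - x1" using lt by (simp add: l_def)
  then have "(1-l) *\<^sub>R pt x1 y + l *\<^sub>R pt x2 y = pt x y"
    by (simp add: pt_scale pt_add algebra_simps)
  ultimately show ?thesis by simp
qed

lemma fr:
  fixes K :: "(real^2) set"
  assumes "p \<in> K" "d \<noteq> 0" "\<And>e. e > 0 \<Longrightarrow> p + e *\<^sub>R d \<notin> K"
  shows "p \<in> frontier K"
proof -
  have "p \<notin> interior K"
  proof
    assume "p \<in> interior K"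
    then obtain r where r: "r > 0" "ball p r \<subseteq> K" using mem_interior by blast
    define e where "e = r / (2 * norm d)"
    have e: "e > 0" using r assms(2) by (simp add: e_def)
    have "dist p (p + e *\<^sub>R d) = e * norm d" using e by (simp add: dist_norm)
    also have "\<dots> = r/2" using assms(2) by (simp add: e_def)
    finally have "p + e *\<^sub>R d \<in> ball p r" using r by simp
    then show False using r assms(3)[OF e] by auto
  qed
  then show ?thesis using assms(1) closure_subset by (auto simp: frontier_def)
qed

lemma pt_zero[simp]: "pt a b = 0 \<longleftrightarrow> a = 0 \<and> b = 0" by (simp add: vec_eq_iff forall_2)

lemma fr_right: "pt x y \<in> K \<Longrightarrow> (\<And>x'. x < x' \<Longrightarrow> pt x' y \<notin> K) \<Longrightarrow> pt x y \<in> frontier K"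
  by (rule fr[of _ _ "pt 1 0"]) (auto simp: pt_add pt_scale)
lemma fr_left: "pt x y \<in> K \<Longrightarrow> (\<And>x'. x' < x \<Longrightarrow> pt x' y \<notin> K) \<Longrightarrow> pt x y \<in> frontier K"
  by (rule fr[of _ _ "pt (-1) 0"]) (auto simp: pt_add pt_scale)
lemma fr_up: "pt x y \<in> K \<Longrightarrow> (\<And>y'. y < y' \<Longrightarrow> pt x y' \<notin> K) \<Longrightarrow> pt x y \<in> frontier K"
  by (rule fr[of _ _ "pt 0 1"]) (auto simp: pt_add pt_scale)
lemma fr_down: "pt x y \<in> K \<Longrightarrow> (\<And>y'. y' < y \<Longrightarrow> pt x y' \<notin> K) \<Longrightarrow> pt x y \<in> frontier K"
  by (rule fr[of _ _ "pt 0 (-1)"]) (auto simp: pt_add pt_scale)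

definition sw :: "real^2 \<Rightarrow> real^2" where "sw p = pt (p$2) (p$1)"
definition rf :: "real^2 \<Rightarrow> real^2" where "rf p = pt (-(p$1)) (p$2)"

lemma linear_sw: "linear sw"
  by (rule linearI) (simp_all add: sw_def vec_eq_iff forall_2)
lemma linear_rf: "linear rf"
  by (rule linearI) (simp_all add: rf_def vec_eq_iff forall_2)
lemma sw_sw[simp]: "sw (sw p) = p" by (simp add: sw_def)
lemma rf_rf[simp]: "rf (rf p) = p" by (simp add: rf_def)
lemma sw_pt[simp]: "sw (pt a b) = pt b a" by (simp add: sw_def)
lemma rf_pt[simp]: "rf (pt a b) = pt (-a) b" by (simp add: rf_def)
lemma mem_sw: "p \<in> sw ` K \<longleftrightarrow> sw p \<in> K" by (metis image_iff sw_sw)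
lemma mem_rf: "p \<in> rf ` K \<longleftrightarrow> rf p \<in> K" by (metis image_iff rf_rf)

lemma compact_lin:
  fixes f :: "real^2 \<Rightarrow> real^2"
  shows "linear f \<Longrightarrow> compact K \<Longrightarrow> compact (f ` K)"
  by (metis compact_continuous_image linear_continuous_on linear_conv_bounded_linear)




lemma core:
  fixes K :: "(real^2) set" and p1 p2 p3 p4 :: "real^2" and a b :: real
  assumes cK: "compact K" and vK: "convex K"
    and inK: "p1 \<in> K" "p2 \<in> K" "p3 \<in> K" "p4 \<in> K"
    and bd1: "\<And>k. k\<in>K \<Longrightarrow> p1$1 \<le> k$1" and bd2: "\<And>k. k\<in>K \<Longrightarrow> p2$2 \<le> k$2"
    and bd3: "\<And>k. k\<in>K \<Longrightarrow> k$1 \<le> p3$1" and bd4: "\<And>k. k\<in>K \<Longrightarrow> k$2 \<le> p4$2"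
    and s1: "p1$1 < p2$1" "p1$1 < p4$1"
    and s2: "p2$2 < p1$2" "p2$2 < p3$2"
    and s3: "p2$1 < p3$1" "p4$1 < p3$1"
    and s4: "p1$2 < p4$2"
    and ab: "0 \<le> a" "0 \<le> b" "a \<noteq> 0 \<or> b \<noteq> 0"
  shows "\<exists>u\<in>frontier K. \<exists>v\<in>frontier K. \<exists>w\<in>frontier K. \<exists>t. t \<noteq> 0 \<and>
           u - v = t *\<^sub>R pt a b \<and> w$1 = u$1 \<and> w$2 = v$2"
proof -
  define m1 where "m1 = p1$1"
  define M1 where "M1 = p3$1"
  define m2 where "m2 = p2$2"
  define M2 where "M2 = p4$2"
  have bx: "m1 \<le> x" "x \<le> M1" "m2 \<le> y" "y \<le> M2" if "pt x y \<in> K" for x y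
    using bd1[OF that] bd2[OF that] bd3[OF that] bd4[OF that] by (auto simp: m1_def M1_def m2_def M2_def)
  have m12: "m1 < M1" "m2 < M2" using s1 s3 s2 s4 by (auto simp: m1_def M1_def m2_def M2_def)
  have hne: "\<exists>x. pt x y \<in> K \<and> min (p2$1) (p4$1) \<le> x \<and> x \<le> max (p2$1) (p4$1)"
    if "m2 \<le> y" "y \<le> M2" for y
    using seg[OF vK inK(2) inK(4)] that by (simp add: m2_def M2_def)
  have vne: "\<exists>z. pt s z \<in> K \<and> min (p1$2) (p3$2) \<le> z" if "m1 \<le> s" "s \<le> M1" for s
  proof -
    have sp: "sw p1 \<in> sw ` K" "sw p3 \<in> sw ` K" using inK by auto
    have "\<exists>z. pt z s \<in> sw ` K \<and> min (sw p1 $1) (sw p3 $1) \<le> z \<and> z \<le> max (sw p1 $1) (sw p3 $1)"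
      by (rule seg[OF convex_linear_image[OF linear_sw vK] sp]) (use that in \<open>auto simp: sw_def m1_def M1_def\<close>)
    then obtain z where "pt z s \<in> sw ` K" "min (sw p1 $1) (sw p3 $1) \<le> z" by blast
    then show ?thesis by (intro exI[of _ z]) (auto simp: mem_sw sw_def)
  qed
  define R where "R = (\<lambda>y. Sup {x. pt x y \<in> K})"
  define L where "L = (\<lambda>y. - Sup {x. pt x y \<in> rf ` K})"
  define hi where "hi = (\<lambda>s. Sup {y. pt y s \<in> sw ` K})"
  note SR = sect_sup[OF cK vK less_imp_le[OF m12(2)], of]
  have R1: "pt (R y) y \<in> K" if "m2 \<le> y" "y \<le> M2" for y
    unfolding R_def by (rule SR(1)) (use hne that in auto)
  have R2: "x \<le> R y" if "pt x y \<in> K" for x y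
    unfolding R_def by (rule SR(2)) (use hne that in auto)
  have R3: "continuous_on {m2..M2} R"
    unfolding R_def by (rule SR(3)) (use hne in auto)
  note SL = sect_sup[OF compact_lin[OF linear_rf cK] convex_linear_image[OF linear_rf vK] less_imp_le[OF m12(2)]]
  have hneL: "\<exists>x. pt x y \<in> rf ` K" if "m2 \<le> y" "y \<le> M2" for y
    using hne[OF that] by (auto simp: mem_rf intro: exI[of _ "- _"])
  have L1: "pt (L y) y \<in> K" if "m2 \<le> y" "y \<le> M2" for y
    using SL(1)[OF hneL, of y] that unfolding L_def by (auto simp: mem_rf)
  have L2: "L y \<le> x" if "pt x y \<in> K" for x y
  proof -
    have "pt (-x) y \<in> rf ` K" using that by (simp add: mem_rf)
    then have "-x \<le> Sup {x. pt x y \<in> rf ` K}" by (intro SL(2)) (use hneL in auto)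
    then show ?thesis by (simp add: L_def)
  qed
  have L3: "continuous_on {m2..M2} L"
    unfolding L_def by (intro continuous_on_minus SL(3)[OF hneL])
  note SH = sect_sup[OF compact_lin[OF linear_sw cK] convex_linear_image[OF linear_sw vK] less_imp_le[OF m12(1)]]
  have hneH: "\<exists>x. pt x s \<in> sw ` K" if "m1 \<le> s" "s \<le> M1" for s
    using vne[OF that] by (auto simp: mem_sw)
  have H1: "pt s (hi s) \<in> K" if "m1 \<le> s" "s \<le> M1" for s
    using SH(1)[OF hneH, of s] that unfolding hi_def by (auto simp: mem_sw)
  have H2: "z \<le> hi s" if "pt s z \<in> K" for s z
    unfolding hi_def by (rule SH(2)[OF hneH]) (use that in \<open>auto simp: mem_sw\<close>)
  have H3: "continuous_on {m1..M1} hi"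
    unfolding hi_def by (rule SH(3)[OF hneH])
  have hipos: "m2 < hi s" if sr0: "m1 \<le> s" "s \<le> M1" for s
  proof -
    obtain z where "pt s z \<in> K" "min (p1$2) (p3$2) \<le> z" using vne[OF sr0] by blast
    then show ?thesis using H2[of s z] s2 by (auto simp: m2_def)
  qed
  define ys where "ys = hi M1"
  have "pt M1 (p3$2) \<in> K" using inK(3) by (metis pt_eta M1_def)
  then have ys_ge: "p3$2 \<le> ys" unfolding ys_def by (rule H2)
  have ysK: "pt M1 ys \<in> K" unfolding ys_def using m12 by (intro H1) auto
  have ys_le: "ys \<le> M2" using bx[OF ysK] by simp
  have ys_gt: "m2 < ys" using ys_ge s2 by (simp add: m2_def)
  have Rys: "R ys = M1" using R2[OF ysK] bx[OF R1[of ys]] ys_le ys_gt by force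
  have Lys: "L ys < M1"
  proof -
    obtain x where "pt x ys \<in> K" "x \<le> max (p2$1) (p4$1)" using hne[of ys] ys_le ys_gt by auto
    then show ?thesis using L2[of x ys] s3 by (auto simp: M1_def)
  qed
  have Dpos: "L y < R y" if y: "m2 < y" "y < M2" for y
  proof -
    have "m2 \<le> p1$2" "p1$2 \<le> M2" using s2 s4 by (auto simp: m2_def M2_def)
    then obtain x0 where x0: "pt x0 (p1$2) \<in> K" "min (p2$1) (p4$1) \<le> x0" using hne by blast
    have P: "p1$2 = pt x0 (p1$2) $2" "p1$1 < pt x0 (p1$2) $1" using x0 s1 by auto
    have "\<exists>x x'. x < x' \<and> pt x y \<in> K \<and> pt x' y \<in> K"
    proof (cases "y \<le> p1$2")
      case True
      then show ?thesis using tp[OF vK inK(2) inK(1) x0(1) P] y by (auto simp: m2_def)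
    next
      case False
      then show ?thesis using tp[OF vK inK(4) inK(1) x0(1) P] y by (auto simp: M2_def)
    qed
    then obtain x x' where "x < x'" "pt x y \<in> K" "pt x' y \<in> K" by blast
    then show ?thesis using L2[of x y] R2[of x' y] by auto
  qed
  define g where "g = (\<lambda>y. a*(hi (R y) - y) - b*(R y - L y))"
  have Rr: "m1 \<le> R y" "R y \<le> M1" if "m2 \<le> y" "y \<le> M2" for y
    using bx[OF R1[OF that]] by auto
  show ?thesis
  proof (cases "g m2 \<le> 0")
    case True
    define s where "s = R m2"
    have sr: "m1 \<le> s" "s \<le> M1" using Rr[of m2] m12 by (auto simp: s_def)
    have hs: "m2 < hi s" using hipos[OF sr] .
    have bpos: "b > 0"
    proof (rule ccontr)
      assume "\<not> b > 0"
      then have "b = 0" "a > 0" using ab by auto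
      then have "g m2 > 0" using hs by (simp add: g_def s_def)
      then show False using True by simp
    qed
    define t where "t = (hi s - m2) / b"
    have tpos: "t > 0" using hs bpos by (simp add: t_def)
    have tb: "t * b = hi s - m2" using bpos by (simp add: t_def)
    have "a * (hi s - m2) \<le> b * (s - L m2)" using True by (simp add: g_def s_def)
    moreover have "(t * a) * b = a * (hi s - m2)" using tb by (metis mult.commute mult.left_commute)
    ultimately have "(t * a) * b \<le> (s - L m2) * b" by (simp add: algebra_simps)
    then have "t * a \<le> s - L m2" using bpos by (simp add: mult_le_cancel_right)
    moreover have "0 \<le> t * a" using tpos ab by simp
    ultimately have vK: "pt (s - t*a) m2 \<in> K"
      using secconv[OF vK L1[of m2] R1[of m2]] m12 by (auto simp: s_def)
    have wK: "pt s m2 \<in> K" using R1[of m2] m12 by (simp add: s_def)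
    have uK: "pt s (hi s) \<in> K" using H1[OF sr] .
    have fu: "pt s (hi s) \<in> frontier K" using uK H2 by (intro fr_up) force+
    have fv: "pt (s - t*a) m2 \<in> frontier K" using vK bx by (intro fr_down) force+
    have fw: "pt s m2 \<in> frontier K" using wK bx by (intro fr_down) force+
    have eq: "pt s (hi s) - pt (s - t*a) m2 = t *\<^sub>R pt a b" using tb by (simp add: pt_diff pt_scale)
    show ?thesis
      by (rule bexI[OF _ fu], rule bexI[OF _ fv], rule bexI[OF _ fw]) (use eq tpos in \<open>intro exI[of _ t], simp\<close>)
  next
    case False
    have gys: "g ys \<le> 0" using Rys Lys ab ys_def by (simp add: g_def mult_nonneg_nonneg)
    have Rsub: "R ` {m2..ys} \<subseteq> {m1..M1}" using Rr ys_le by auto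
    have R3': "continuous_on {m2..ys} R" by (rule continuous_on_subset[OF R3]) (use ys_le in auto)
    have L3': "continuous_on {m2..ys} L" by (rule continuous_on_subset[OF L3]) (use ys_le in auto)
    have HR: "continuous_on {m2..ys} (\<lambda>y. hi (R y))"
      by (rule continuous_on_compose2[OF H3 R3' Rsub])
    have gc: "continuous_on {m2..ys} g" unfolding g_def
      by (intro continuous_intros HR R3' L3')
    obtain y0 where y0: "m2 \<le> y0" "y0 \<le> ys" "g y0 = 0"
      using IVT2'[where f=g and a=m2 and b=ys and y=0, OF gys _ _ gc] False ys_gt by auto
    have y0m: "m2 < y0" using y0 False by (cases "y0 = m2") auto
    have D: "L y0 < R y0"
    proof (cases "y0 = ys")
      case True then show ?thesis using Rys Lys by simp
    next
      case False then show ?thesis using Dpos y0m y0 ys_le by auto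
    qed
    have apos: "a > 0"
    proof (rule ccontr)
      assume "\<not> a > 0"
      then have "a = 0" "b > 0" using ab by auto
      then have "g y0 < 0" using D by (simp add: g_def)
      then show False using y0 by simp
    qed
    define s where "s = R y0"
    define t where "t = (s - L y0) / a"
    have tpos: "t > 0" using D apos by (simp add: t_def s_def)
    have ta: "t * a = s - L y0" using apos by (simp add: t_def)
    have "a * (hi s - y0) = b * (s - L y0)" using y0 by (simp add: g_def s_def)
    then have tb: "t * b = hi s - y0" using apos by (simp add: t_def field_simps)
    have y0r: "m2 \<le> y0" "y0 \<le> M2" using y0 ys_le by auto
    have sr: "m1 \<le> s" "s \<le> M1" using Rr[OF y0r] by (auto simp: s_def)
    have wK: "pt s y0 \<in> K" using R1[OF y0r] by (simp add: s_def)
    have vK: "pt (L y0) y0 \<in> K" using L1[OF y0r] .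
    have uK: "pt s (hi s) \<in> K" using H1[OF sr] .
    have fu: "pt s (hi s) \<in> frontier K" using uK H2 by (intro fr_up) force+
    have fv: "pt (L y0) y0 \<in> frontier K" using vK L2 by (intro fr_left) force+
    have fw: "pt s y0 \<in> frontier K" using wK R2 unfolding s_def by (intro fr_right) force+
    have eq: "pt s (hi s) - pt (L y0) y0 = t *\<^sub>R pt a b" using ta tb by (simp add: pt_diff pt_scale)
    show ?thesis
      by (rule bexI[OF _ fu], rule bexI[OF _ fv], rule bexI[OF _ fw]) (use eq tpos in \<open>intro exI[of _ t], simp\<close>)
  qed
qed



lemma frontier_lin:
  fixes f :: "real^2 \<Rightarrow> real^2"
  assumes "linear f" "inj f"
  shows "frontier (f ` K) = f ` frontier K"
  using assms by (simp add: frontier_def closure_injective_linear_image[symmetric]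
      interior_injective_linear_image image_set_diff)

lemma inj_rf: "inj rf" by (metis injI rf_rf)

lemma quad2:
  fixes K :: "(real^2) set" and p1 p2 p3 p4 :: "real^2" and a b :: real
  assumes cK: "compact K" and vK: "convex K"
    and inK: "p1 \<in> K" "p2 \<in> K" "p3 \<in> K" "p4 \<in> K"
    and bd1: "\<And>k. k\<in>K \<Longrightarrow> p1$1 \<le> k$1" and bd2: "\<And>k. k\<in>K \<Longrightarrow> p2$2 \<le> k$2"
    and bd3: "\<And>k. k\<in>K \<Longrightarrow> k$1 \<le> p3$1" and bd4: "\<And>k. k\<in>K \<Longrightarrow> k$2 \<le> p4$2"
    and s: "p1$1 < p2$1" "p1$1 < p4$1" "p2$2 < p1$2" "p2$2 < p3$2"
       "p2$1 < p3$1" "p4$1 < p3$1" "p1$2 < p4$2" "p3$2 < p4$2" "p1$1 < p3$1"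
    and ab: "a \<le> 0" "0 \<le> b" "a \<noteq> 0 \<or> b \<noteq> 0"
  shows "\<exists>u\<in>frontier K. \<exists>v\<in>frontier K. \<exists>w\<in>frontier K. \<exists>t. t \<noteq> 0 \<and>
           u - v = t *\<^sub>R pt a b \<and> w$1 = u$1 \<and> w$2 = v$2"
proof -
  let ?K = "rf ` K"
  have bK: "rf k \<in> K" if "k \<in> ?K" for k using that by (simp add: mem_rf)
  have "\<exists>u\<in>frontier ?K. \<exists>v\<in>frontier ?K. \<exists>w\<in>frontier ?K. \<exists>t. t \<noteq> 0 \<and>
           u - v = t *\<^sub>R pt (-a) b \<and> w$1 = u$1 \<and> w$2 = v$2"
  proof (rule core[of ?K "rf p3" "rf p2" "rf p1" "rf p4"])
    show "compact ?K" by (rule compact_lin[OF linear_rf cK])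
    show "convex ?K" by (rule convex_linear_image[OF linear_rf vK])
  qed (use inK s ab in \<open>auto simp: rf_def dest: bd1 bd2 bd3 bd4\<close>)
  then obtain u v w t where uvw: "u \<in> frontier ?K" "v \<in> frontier ?K" "w \<in> frontier ?K"
    and t: "t \<noteq> 0" "u - v = t *\<^sub>R pt (-a) b" "w$1 = u$1" "w$2 = v$2" by blast
  have fr: "rf z \<in> frontier K" if "z \<in> frontier ?K" for z
    using that by (simp add: frontier_lin[OF linear_rf inj_rf]) (metis image_iff rf_rf)
  have "rf u - rf v = t *\<^sub>R pt a b"
  proof -
    have "rf u - rf v = rf (u - v)" using linear_diff[OF linear_rf] by simp
    also have "\<dots> = t *\<^sub>R pt a b" using t(2) by (simp add: pt_scale)
    finally show ?thesis .
  qed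
  moreover have "rf w $1 = rf u $1" "rf w $2 = rf v $2" using t by (auto simp: rf_def)
  ultimately show ?thesis using fr[OF uvw(1)] fr[OF uvw(2)] fr[OF uvw(3)] t(1) by blast
qed

lemma allquad:
  fixes K :: "(real^2) set" and p1 p2 p3 p4 :: "real^2" and a b :: real
  assumes cK: "compact K" and vK: "convex K"
    and inK: "p1 \<in> K" "p2 \<in> K" "p3 \<in> K" "p4 \<in> K"
    and bd1: "\<And>k. k\<in>K \<Longrightarrow> p1$1 \<le> k$1" and bd2: "\<And>k. k\<in>K \<Longrightarrow> p2$2 \<le> k$2"
    and bd3: "\<And>k. k\<in>K \<Longrightarrow> k$1 \<le> p3$1" and bd4: "\<And>k. k\<in>K \<Longrightarrow> k$2 \<le> p4$2"
    and s: "p1$1 < p2$1" "p1$1 < p4$1" "p2$2 < p1$2" "p2$2 < p3$2"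
       "p2$1 < p3$1" "p4$1 < p3$1" "p1$2 < p4$2" "p3$2 < p4$2" "p1$1 < p3$1"
    and ab: "a \<noteq> 0 \<or> b \<noteq> 0"
  shows "\<exists>u\<in>frontier K. \<exists>v\<in>frontier K. \<exists>w\<in>frontier K. \<exists>t. t \<noteq> 0 \<and>
           u - v = t *\<^sub>R pt a b \<and> w$1 = u$1 \<and> w$2 = v$2"
proof -
  note Q1 = core[OF cK vK inK bd1 bd2 bd3 bd4 s(1,2,3,4,5,6,7)]
  note Q2 = quad2[OF cK vK inK bd1 bd2 bd3 bd4 s]
  have neg: "\<exists>u\<in>frontier K. \<exists>v\<in>frontier K. \<exists>w\<in>frontier K. \<exists>t. t \<noteq> 0 \<and>
           u - v = t *\<^sub>R pt a b \<and> w$1 = u$1 \<and> w$2 = v$2"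
    if "\<exists>u\<in>frontier K. \<exists>v\<in>frontier K. \<exists>w\<in>frontier K. \<exists>t. t \<noteq> 0 \<and>
           u - v = t *\<^sub>R pt (-a) (-b) \<and> w$1 = u$1 \<and> w$2 = v$2"
  proof -
    from that obtain u v w t where "u\<in>frontier K" "v\<in>frontier K" "w\<in>frontier K" "t \<noteq> 0"
      "u - v = t *\<^sub>R pt (-a) (-b)" "w$1 = u$1" "w$2 = v$2" by blast
    moreover have "t *\<^sub>R pt (-a) (-b) = (-t) *\<^sub>R pt a b" by (simp add: pt_scale)
    ultimately show ?thesis by (metis neg_equal_0_iff_equal)
  qed
  consider "0 \<le> a" "0 \<le> b" | "a \<le> 0" "0 \<le> b" | "a \<le> 0" "b \<le> 0" | "0 \<le> a" "b \<le> 0" by linarith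
  then show ?thesis
  proof cases
    case 1 then show ?thesis using Q1 ab by blast
  next
    case 2 then show ?thesis using Q2 ab by blast
  next
    case 3 then show ?thesis using Q1[of "-a" "-b"] ab neg by auto
  next
    case 4 then show ?thesis using Q2[of "-a" "-b"] ab neg by auto
  qed
qed




definition phi :: "real^2 \<Rightarrow> complex" where "phi p = Complex (p$1) (p$2)"
definition psi :: "complex \<Rightarrow> real^2" where "psi z = pt (Re z) (Im z)"

lemma psi_phi[simp]: "psi (phi p) = p" by (simp add: phi_def psi_def)
lemma phi_psi[simp]: "phi (psi z) = z" by (simp add: phi_def psi_def)
lemma linear_phi: "linear phi"
  by (rule linearI) (simp_all add: phi_def complex_eq_iff)
lemma linear_psi: "linear psi"
  by (rule linearI) (simp_all add: psi_def pt_add pt_scale)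
lemma inj_phi: "inj phi" by (metis injI psi_phi)
lemma cont_phi: "continuous_on A phi"
  by (metis linear_continuous_on linear_conv_bounded_linear linear_phi)
lemma cont_psi: "continuous_on A psi"
  by (metis linear_continuous_on linear_conv_bounded_linear linear_psi)

lemma inside_phi: "inside (phi ` C) \<subseteq> phi ` inside C"
proof
  fix z assume z: "z \<in> inside (phi ` C)"
  then have zn: "z \<notin> phi ` C" and bz: "bounded (connected_component_set (- phi ` C) z)"
    by (auto simp: inside_def)
  have hom: "homeomorphism (- phi ` C) (- C) psi phi"
    unfolding homeomorphism_def
  proof (intro conjI ballI cont_phi cont_psi)
    show "psi ` (- phi ` C) = - C"
    proof
      show "psi ` (- phi ` C) \<subseteq> - C" by auto (metis phi_psi imageI)
      show "- C \<subseteq> psi ` (- phi ` C)"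
      proof
        fix p assume "p \<in> - C"
        then have "phi p \<in> - phi ` C" using inj_phi by (auto dest: injD)
        then show "p \<in> psi ` (- phi ` C)" by (metis imageI psi_phi)
      qed
    qed
    show "phi ` (- C) = - phi ` C"
    proof
      show "phi ` (- C) \<subseteq> - phi ` C" using inj_phi by (auto dest: injD)
      show "- phi ` C \<subseteq> phi ` (- C)"
      proof
        fix y assume "y \<in> - phi ` C"
        then have "psi y \<in> - C" by (metis ComplD ComplI imageI phi_psi)
        then show "y \<in> phi ` (- C)" by (metis imageI phi_psi)
      qed
    qed
  qed auto
  have "connected_component_set (- C) (psi z) = psi ` connected_component_set (- phi ` C) z"
    by (rule connected_component_set_homeomorphism[OF hom]) (use zn in auto)
  moreover have "bounded (psi ` connected_component_set (- phi ` C) z)"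
    using bz linear_psi by (metis bounded_linear_image linear_conv_bounded_linear)
  moreover have "psi z \<notin> C" using zn by (metis imageI phi_psi)
  ultimately have "psi z \<in> inside C" by (simp add: inside_def)
  then show "z \<in> phi ` inside C" by (metis imageI phi_psi)
qed

lemma jordan_closure:
  assumes "jordan_curve C"
  shows "C \<subseteq> closure (inside C)" "compact C"
proof -
  obtain g where g: "simple_path g" "pathfinish g = pathstart g" "path_image g = C"
    using assms by (auto simp: jordan_curve_def)
  show "compact C" using g by (metis compact_path_image simple_path_imp_path)
  have sp: "simple_path (phi \<circ> g)" using g(1) by (simp add: simple_path_linear_image_eq linear_phi inj_phi)
  have lp: "pathfinish (phi \<circ> g) = pathstart (phi \<circ> g)" using g(2) by (simp add: pathstart_compose pathfinish_compose)
  have fr: "frontier (inside (phi ` C)) = phi ` C"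
    using Jordan_inside_outside[OF sp lp] g(3) by (simp add: path_image_compose)
  show "C \<subseteq> closure (inside C)"
  proof
    fix c assume c: "c \<in> C"
    then have "phi c \<in> closure (inside (phi ` C))" using fr by (metis frontier_def Diff_iff imageI)
    also have "\<dots> \<subseteq> closure (phi ` inside C)" by (intro closure_mono inside_phi)
    also have "\<dots> = phi ` closure (inside C)"
      by (rule closure_injective_linear_image[symmetric, OF linear_phi inj_phi])
    finally show "c \<in> closure (inside C)" by (metis image_iff psi_phi)
  qed
qed

lemma cvx_ge: "0 \<le> u \<Longrightarrow> 0 \<le> v \<Longrightarrow> u+v=1 \<Longrightarrow> c \<le> x \<Longrightarrow> c \<le> y \<Longrightarrow> c \<le> u * x + v * (y::real)"
proof -
  assume a: "0 \<le> u" "0 \<le> v" "u+v=1" "c \<le> x" "c \<le> y"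
  have "u * c \<le> u * x" "v * c \<le> v * y" using a by (auto intro: mult_left_mono)
  moreover have "c = u * c + v * c" using a(3) by (metis distrib_right mult_1)
  ultimately show ?thesis by linarith
qed

lemma cvx_le: "0 \<le> u \<Longrightarrow> 0 \<le> v \<Longrightarrow> u+v=1 \<Longrightarrow> x \<le> c \<Longrightarrow> y \<le> c \<Longrightarrow> u * x + v * (y::real) \<le> c"
proof -
  assume a: "0 \<le> u" "0 \<le> v" "u+v=1" "x \<le> c" "y \<le> c"
  have "u * x \<le> u * c" "v * y \<le> v * c" using a by (auto intro: mult_left_mono)
  moreover have "c = u * c + v * c" using a(3) by (metis distrib_right mult_1)
  ultimately show ?thesis by linarith
qed

lemma halfplane_ge: "convex {k::real^2. c \<le> k$i}" "closed {k::real^2. c \<le> k$i}"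
  by (auto simp: convex_def intro!: closed_Collect_le continuous_intros cvx_ge)
lemma halfplane_le: "convex {k::real^2. k$i \<le> c}" "closed {k::real^2. k$i \<le> c}"
  by (auto simp: convex_def intro!: closed_Collect_le continuous_intros cvx_le)




theorem lemma4:
  fixes C :: "(real^2) set" and c1 c2 c3 c4 :: "real^2"
  assumes "jordan_curve C"
    and "convex (inside C)"
    and "c1 \<in> C" "c2 \<in> C" "c3 \<in> C" "c4 \<in> C"
    and "\<forall>c\<in>C. c1$1 \<le> c$1"
    and "\<forall>c\<in>C. c2$2 \<le> c$2"
    and "\<forall>c\<in>C. c$1 \<le> c3$1"
    and "\<forall>c\<in>C. c$2 \<le> c4$2"
    and "c1$1 < min (c2$1) (min (c3$1) (c4$1))"
    and "c2$2 < min (c1$2) (min (c3$2) (c4$2))"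
    and "c3$1 > max (c1$1) (max (c2$1) (c4$1))"
    and "c4$2 > max (c1$2) (max (c2$2) (c3$2))"
  shows "\<forall>x::real^2. \<exists>u\<in>C. \<exists>v\<in>C. \<exists>w\<in>C. \<exists>t::real. t \<noteq> 0 \<and>
           u - v = t *\<^sub>R x \<and> w$1 = u$1 \<and> w$2 = v$2"
proof
  fix x :: "real^2"
  note J = jordan_closure[OF assms(1)]
  define K where "K = closure (inside C)"
  have sub: "K \<subseteq> T" if "convex T" "closed T" "C \<subseteq> T" for T
  proof -
    have "- T \<subseteq> outside C" using outside_subset_convex that by blast
    then have "inside C \<subseteq> T" using inside_Int_outside[of C] by blast
    then show ?thesis unfolding K_def using that(2) by (rule closure_minimal)
  qed
  have bd1: "c1$1 \<le> k$1" if "k \<in> K" for k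
    using sub[OF halfplane_ge[of "c1$1" 1]] assms(7) that by auto
  have bd2: "c2$2 \<le> k$2" if "k \<in> K" for k
    using sub[OF halfplane_ge[of "c2$2" 2]] assms(8) that by auto
  have bd3: "k$1 \<le> c3$1" if "k \<in> K" for k
    using sub[OF halfplane_le[of 1 "c3$1"]] assms(9) that by auto
  have bd4: "k$2 \<le> c4$2" if "k \<in> K" for k
    using sub[OF halfplane_le[of 2 "c4$2"]] assms(10) that by auto
  have cK: "compact K" unfolding K_def
    using J(2) by (metis bounded_closure bounded_inside closed_closure compact_eq_bounded_closed compact_imp_bounded)
  have vK: "convex K" unfolding K_def using assms(2) by (rule convex_closure)
  have inK: "c1 \<in> K" "c2 \<in> K" "c3 \<in> K" "c4 \<in> K" using J(1) assms(3-6) by (auto simp: K_def)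
  have frC: "frontier K \<subseteq> C"
  proof -
    have "frontier K \<subseteq> frontier (inside C)"
      unfolding K_def frontier_def using interior_mono[OF closure_subset[of "inside C"]] by auto
    also have "\<dots> \<subseteq> C" using J(2) by (intro frontier_inside_subset compact_imp_closed)
    finally show ?thesis .
  qed
  show "\<exists>u\<in>C. \<exists>v\<in>C. \<exists>w\<in>C. \<exists>t::real. t \<noteq> 0 \<and> u - v = t *\<^sub>R x \<and> w$1 = u$1 \<and> w$2 = v$2"
  proof (cases "x = 0")
    case True
    then show ?thesis using assms(3) by (intro bexI[of _ c1] exI[of _ 1]) auto
  next
    case False
    then have ab: "x$1 \<noteq> 0 \<or> x$2 \<noteq> 0" by (metis pt_eta pt_zero)
    have "\<exists>u\<in>frontier K. \<exists>v\<in>frontier K. \<exists>w\<in>frontier K. \<exists>t. t \<noteq> 0 \<and>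
           u - v = t *\<^sub>R pt (x$1) (x$2) \<and> w$1 = u$1 \<and> w$2 = v$2"
      by (rule allquad[OF cK vK inK bd1 bd2 bd3 bd4 _ _ _ _ _ _ _ _ _ ab]) (use assms(11-14) in auto)
    then show ?thesis using frC by (simp only: pt_eta) blast
  qed
qed


end
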